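(* Let $\mathcal{R}\colon\mathbf{Mod}_{\mathbb{R}_{\geq0}}\to\mathbf{Vect}_{\mathbb{R}}$ be a left adjoint to the forgetful functor $\mathbf{Vect}_{\mathbb{R}}\to\mathbf{Mod}_{\mathbb{R}_{\geq0}}$ (restriction of scalars along $\mathbb{R}_{\geq0}\hookrightarrow\mathbb{R}$), and let $\mathcal{C}\colon\mathbf{Vect}_{\mathbb{R}}\to\mathbf{Vect}_{\mathbb{C}}$ be a left adjoint to the forgetful functor $\mathbf{Vect}_{\mathbb{C}}\to\mathbf{Vect}_{\mathbb{R}}$ (restriction of scalars along $\mathbb{R}\hookrightarrow\mathbb{C}$). For a finite-dimensional complex Hilbert space $H$, the transpose under the first adjunction of the inclusion $\mathcal{Pos}(H)\hookrightarrow\mathcal{SA}(H)$ (a map in $\mathbf{Mod}_{\mathbb{R}_{\geq0}}$) is an isomorphism $\mathcal{R}(\mathcal{Pos}(H))\cong\mathcal{SA}(H)$ in $\mathbf{Vect}_{\mathbb{R}}$, and the transpose under the second adjunction of the inclusion $\mathcal{SA}(H)\hookrightarrow\mathcal{B}(H)$ (a map in $\mathbf{Vect}_{\mathbb{R}}$) is an isomorphism $\mathcal{C}(\mathcal{SA}(H))\cong\mathcal{B}(H)$ in $\mathbf{Vect}_{\mathbb{C}}$. Consequently $\mathcal{R}\circ\mathcal{Pos}\cong\mathcal{SA}$ and $\mathcal{C}\circ\mathcal{SA}\cong\mathcal{B}$ as functors on $\mathbf{FdHilb}$.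
   Context: For a finite-dimensional complex Hilbert space $H$: $\mathcal{B}(H)$ is the complex vector space of linear operators $H\to H$; $\mathcal{SA}(H)\subseteq\mathcal{B}(H)$ is the real vector space of self-adjoint operators ($A^\dagger=A$); $\mathcal{Pos}(H)\subseteq\mathcal{SA}(H)$ is the $\mathbb{R}_{\geq0}$-module of positive operators ($\langle Ax,x\rangle\ge0$ for all $x$). $\mathbf{FdHilb}$ is the category of finite-dimensional complex Hilbert spaces and linear maps, and $\mathcal{B},\mathcal{SA},\mathcal{Pos}$ are functors from it (to $\mathbf{Vect}_{\mathbb{C}}$, $\mathbf{Vect}_{\mathbb{R}}$, $\mathbf{Mod}_{\mathbb{R}_{\ge0}}$ respectively) sending $C\colon H\to K$ to $A\mapsto CAC^{\dagger}$. $\mathbf{Mod}_{\mathbb{R}_{\geq0}}$ is the category of modules over the semiring $\mathbb{R}_{\geq0}$ (commutative monoids with a scalar multiplication by non-negative reals that is additive in each argument, unital and associative) with linear maps; $\mathbf{Vect}_{\mathbb{R}}$, $\mathbf{Vect}_{\mathbb{C}}$ are the categories of real, resp. complex, vector spaces. *)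

theory Defs
  imports "HOL-Analysis.Analysis" "HOL-Library.Complex_Order"
begin

text \<open>A finite-dimensional complex Hilbert space H is modelled as complex^'n with the
standard inner product; operators on H are matrices complex^'n^'n.\<close>

definition cinner :: "complex^'n \<Rightarrow> complex^'n \<Rightarrow> complex" where
  "cinner x y = (\<Sum>i\<in>UNIV. x$i * cnj (y$i))"

definition cadj :: "complex^'n^'m \<Rightarrow> complex^'m^'n" where
  "cadj A = (\<chi> i j. cnj (A$j$i))"

definition cscale :: "complex \<Rightarrow> complex^'n^'m \<Rightarrow> complex^'n^'m" where
  "cscale c A = (\<chi> i j. c * A$i$j)"

definition Bops :: "(complex^'n^'n) set" where "Bops = UNIV"
definition SA :: "(complex^'n^'n) set" where "SA = {A. cadj A = A}"
definition Pos :: "(complex^'n^'n) set" where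
  "Pos = {A. \<forall>x. 0 \<le> cinner (A *v x) x}"

text \<open>Action of the functors on a morphism C: A \<mapsto> C A C^*\<close>
definition conj_map :: "complex^'n^'m \<Rightarrow> complex^'n^'n \<Rightarrow> complex^'m^'m" where
  "conj_map C A = C ** A ** cadj C"

definition pos_linear_on :: "(real \<Rightarrow> 'v \<Rightarrow> 'v) \<Rightarrow> 'a::real_vector set \<Rightarrow> ('a \<Rightarrow> 'v::ab_group_add) \<Rightarrow> bool" where
  "pos_linear_on s S f \<longleftrightarrow> (\<forall>A\<in>S. \<forall>B\<in>S. f (A + B) = f A + f B) \<and>
                           (\<forall>r\<ge>0. \<forall>A\<in>S. f (r *\<^sub>R A) = s r (f A))"

definition real_linear_on :: "(real \<Rightarrow> 'v \<Rightarrow> 'v) \<Rightarrow> 'a::real_vector set \<Rightarrow> ('a \<Rightarrow> 'v::ab_group_add) \<Rightarrow> bool" where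
  "real_linear_on s S f \<longleftrightarrow> (\<forall>A\<in>S. \<forall>B\<in>S. f (A + B) = f A + f B) \<and>
                           (\<forall>r. \<forall>A\<in>S. f (r *\<^sub>R A) = s r (f A))"

definition complex_linear_ops :: "(complex \<Rightarrow> 'w \<Rightarrow> 'w) \<Rightarrow> (complex^'n^'n \<Rightarrow> 'w::ab_group_add) \<Rightarrow> bool" where
  "complex_linear_ops s g \<longleftrightarrow> (\<forall>A B. g (A + B) = g A + g B) \<and>
                           (\<forall>c A. g (cscale c A) = s c (g A))"

end

theory Submission
  imports Defs
begin


definition Q :: "complex^'n^'n \<Rightarrow> complex^'n \<Rightarrow> complex" where
  "Q A x = cinner (A *v x) x"

lemma Q_expand: "Q A x = (\<Sum>i\<in>UNIV. \<Sum>j\<in>UNIV. A$i$j * x$j * cnj (x$i))"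
  by (simp add: Q_def cinner_def matrix_vector_mult_def sum_distrib_right)

lemma Q_two:
  assumes "i \<noteq> j"
  shows "Q A (axis i a + axis j b) = A$i$i * a * cnj a + A$i$j * b * cnj a + A$j$i * a * cnj b + A$j$j * b * cnj b"
  using assms
  by (simp add: Q_expand axis_def algebra_simps sum.distrib if_distrib[of "\<lambda>x. _ * x"] if_distrib[of cnj] if_distrib[of "\<lambda>x. x * _"] sum.delta cong: if_cong)

lemma sum_if_const: "(\<Sum>j\<in>A. if P then f j else 0) = (if P then (\<Sum>j\<in>A. f j) else 0)"
  by simp

lemma Q_one: "Q A (axis i a) = A$i$i * a * cnj a"
  by (simp add: Q_expand axis_def if_distrib[of "\<lambda>x. _ * x"] if_distrib[of cnj] if_distrib[of "\<lambda>x. x * _"] sum.delta sum.delta' sum_if_const cong: if_cong)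



lemma nonneg_Im: "(0::complex) \<le> z \<Longrightarrow> Im z = 0"
  by (simp add: less_eq_complex_def)

lemma Pos_SA: "A \<in> Pos \<Longrightarrow> A \<in> SA"
proof -
  assume "A \<in> Pos"
  then have P: "\<And>x. Im (Q A x) = 0" by (auto simp: Pos_def Q_def nonneg_Im)
  have "cnj (A$j$i) = A$i$j" for i j
  proof (cases "i = j")
    case True
    have "Im (A$i$i) = 0" using P[of "axis i 1"] by (simp add: Q_one)
    then show ?thesis using True by (simp add: complex_eq_iff)
  next
    case False
    have ii: "Im (A$i$i) = 0" using P[of "axis i 1"] by (simp add: Q_one)
    have jj: "Im (A$j$j) = 0" using P[of "axis j 1"] by (simp add: Q_one)
    have 1: "Im (A$i$i + A$i$j + A$j$i + A$j$j) = 0" using P[of "axis i 1 + axis j 1"] False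
      by (simp add: Q_two)
    have 2: "Im (A$i$i + A$i$j * \<i> - A$j$i * \<i> + A$j$j) = 0" using P[of "axis i 1 + axis j \<i>"] False
      by (simp add: Q_two)
    show ?thesis using ii jj 1 2 by (simp add: complex_eq_iff)
  qed
  then show "A \<in> SA" by (simp add: SA_def cadj_def vec_eq_iff)
qed

lemma cinner_adj: "cinner (C *v y) x = cinner y (cadj C *v x)"
proof -
  have "cinner (C *v y) x = (\<Sum>i\<in>UNIV. \<Sum>j\<in>UNIV. C$i$j * y$j * cnj (x$i))"
    by (simp add: cinner_def matrix_vector_mult_def sum_distrib_right)
  also have "\<dots> = (\<Sum>j\<in>UNIV. \<Sum>i\<in>UNIV. C$i$j * y$j * cnj (x$i))"
    by (rule sum.swap)
  also have "\<dots> = cinner y (cadj C *v x)"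
    by (simp add: cinner_def cadj_def matrix_vector_mult_def sum_distrib_left mult_ac)
  finally show ?thesis .
qed

lemma cadj_mult: "cadj (A ** B) = cadj B ** cadj A"
  by (simp add: cadj_def matrix_matrix_mult_def vec_eq_iff mult.commute)

lemma cadj_cadj: "cadj (cadj A) = A"
  by (simp add: cadj_def vec_eq_iff)

lemma conj_Pos: "A \<in> Pos \<Longrightarrow> conj_map C A \<in> Pos"
proof -
  assume "A \<in> Pos"
  have "(C ** A ** cadj C) *v x = C *v (A *v (cadj C *v x))" for x
    by (simp add: matrix_vector_mul_assoc[symmetric] matrix_mul_assoc)
  then have "cinner (conj_map C A *v x) x = cinner (A *v (cadj C *v x)) (cadj C *v x)" for x
    unfolding conj_map_def by (simp only: cinner_adj)
  then show ?thesis using \<open>A \<in> Pos\<close> by (simp add: Pos_def)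
qed

lemma conj_SA: "A \<in> SA \<Longrightarrow> conj_map C A \<in> SA"
  by (simp add: SA_def conj_map_def cadj_mult cadj_cadj matrix_mul_assoc)



lemma Q_add: "Q (A + B) x = Q A x + Q B x"
  by (simp add: Q_expand algebra_simps sum.distrib)

lemma Q_mat: "Q (mat k) x = k * complex_of_real (\<Sum>i\<in>UNIV. (cmod (x$i))^2)"
proof -
  have "Q (mat k) x = (\<Sum>i\<in>UNIV. k * (x$i * cnj (x$i)))"
    by (simp add: Q_expand mat_def if_distrib[of "\<lambda>x. x * _"] if_distrib[of "\<lambda>x. _ * x"] sum.delta' sum_if_const mult_ac cong: if_cong)
  also have "\<dots> = k * complex_of_real (\<Sum>i\<in>UNIV. (cmod (x$i))^2)"
    by (simp add: sum_distrib_left complex_norm_square[symmetric])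
  finally show ?thesis .
qed

lemma SA_Q_real: "A \<in> SA \<Longrightarrow> cnj (Q A x) = Q A x"
proof -
  assume "A \<in> SA"
  then have h: "cnj (A$i$j) = A$j$i" for i j
    by (simp add: SA_def cadj_def vec_eq_iff)
  have "cnj (Q A x) = (\<Sum>i\<in>UNIV. \<Sum>j\<in>UNIV. A$j$i * cnj (x$j) * x$i)"
    by (simp add: Q_expand h)
  also have "\<dots> = (\<Sum>j\<in>UNIV. \<Sum>i\<in>UNIV. A$j$i * cnj (x$j) * x$i)"
    by (rule sum.swap)
  also have "\<dots> = Q A x" by (simp add: Q_expand mult_ac)
  finally show ?thesis .
qed

lemma prod_le_sum: "(a::real) * b \<le> (a^2 + b^2)"
proof -
  have "0 \<le> (a - b)^2" by simp
  then have h1: "2 * (a * b) \<le> a^2 + b^2" by (simp add: power2_eq_square algebra_simps)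
  have h2: "0 \<le> a^2 + b^2" by simp
  from h1 h2 show ?thesis by linarith
qed

lemma Q_bound: "cmod (Q A x) \<le> (\<Sum>i\<in>UNIV. \<Sum>j\<in>UNIV. cmod (A$i$j)) * (\<Sum>k\<in>UNIV. (cmod (x$k))^2)"
proof -
  let ?S = "\<Sum>k\<in>UNIV. (cmod (x$k))^2"
  have xs: "(cmod (x$i))^2 \<le> ?S" for i
    by (rule member_le_sum) auto
  have xx: "cmod (x$j) * cmod (x$i) \<le> ?S" for i j
  proof (cases "i = j")
    case True then show ?thesis using xs[of i] by (simp add: power2_eq_square)
  next
    case False
    have "(cmod (x$i))^2 + (cmod (x$j))^2 = (\<Sum>k\<in>{i,j}. (cmod (x$k))^2)" using False by simp
    also have "\<dots> \<le> ?S" by (rule sum_mono2) auto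
    finally show ?thesis using prod_le_sum[of "cmod (x$j)" "cmod (x$i)"] by linarith
  qed
  have "cmod (Q A x) \<le> (\<Sum>i\<in>UNIV. \<Sum>j\<in>UNIV. cmod (A$i$j * x$j * cnj (x$i)))"
    unfolding Q_expand by (rule order_trans[OF norm_sum sum_mono]) (rule norm_sum)
  also have "\<dots> \<le> (\<Sum>i\<in>UNIV. \<Sum>j\<in>UNIV. cmod (A$i$j) * ?S)"
    by (intro sum_mono) (simp add: norm_mult mult.assoc mult_left_mono xx)
  also have "\<dots> = (\<Sum>i\<in>UNIV. \<Sum>j\<in>UNIV. cmod (A$i$j)) * ?S"
    by (simp add: sum_distrib_right)
  finally show ?thesis .
qed

lemma mat_Pos: "c \<ge> 0 \<Longrightarrow> mat (complex_of_real c) \<in> Pos"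
  by (simp add: Pos_def Q_def[symmetric] Q_mat less_eq_complex_def sum_nonneg)

lemma SA_shift_Pos:
  assumes "A \<in> SA"
  defines "c \<equiv> (\<Sum>i\<in>UNIV. \<Sum>j\<in>UNIV. cmod (A$i$j))"
  shows "A + mat (complex_of_real c) \<in> Pos"
proof -
  have "0 \<le> Q (A + mat (complex_of_real c)) x" for x
  proof -
    let ?S = "\<Sum>k\<in>UNIV. (cmod (x$k))^2"
    have r: "Im (Q A x) = 0" using SA_Q_real[OF assms(1), of x]
      by (simp add: complex_eq_iff)
    have "- Re (Q A x) \<le> cmod (Q A x)" using abs_Re_le_cmod[of "Q A x"] by linarith
    also have "\<dots> \<le> c * ?S" unfolding c_def by (rule Q_bound)
    finally show ?thesis using r by (simp add: Q_add Q_mat less_eq_complex_def)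
  qed
  then show ?thesis by (simp add: Pos_def Q_def)
qed



lemma Q_scale: "Q (r *\<^sub>R A) x = complex_of_real r * Q A x"
  by (simp add: Q_expand scaleR_conv_of_real[where 'a=complex] sum_distrib_left mult_ac)

lemma Pos_zero: "0 \<in> Pos"
  by (simp add: Pos_def cinner_def)

lemma Pos_add: "A \<in> Pos \<Longrightarrow> B \<in> Pos \<Longrightarrow> A + B \<in> Pos"
  by (simp add: Pos_def Q_def[symmetric] Q_add)

lemma Pos_scale: "r \<ge> 0 \<Longrightarrow> A \<in> Pos \<Longrightarrow> r *\<^sub>R A \<in> Pos"
proof -
  assume a: "r \<ge> 0" "A \<in> Pos"
  have "0 \<le> complex_of_real r" using a by (simp add: less_eq_complex_def)
  then show ?thesis using a by (simp add: Pos_def Q_def[symmetric] Q_scale)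
qed

lemma SA_add: "A \<in> SA \<Longrightarrow> B \<in> SA \<Longrightarrow> A + B \<in> SA"
  by (simp add: SA_def cadj_def vec_eq_iff)

lemma SA_scale: "A \<in> SA \<Longrightarrow> r *\<^sub>R A \<in> SA"
  by (simp add: SA_def cadj_def vec_eq_iff scaleR_conv_of_real[where 'a=complex])

lemma SA_diff: "A \<in> SA \<Longrightarrow> B \<in> SA \<Longrightarrow> A - B \<in> SA"
  by (simp add: SA_def cadj_def vec_eq_iff)

lemma SA_zero: "0 \<in> SA"
  by (simp add: SA_def cadj_def vec_eq_iff)

definition Mc :: "complex^'n^'n \<Rightarrow> complex^'n^'n" where
  "Mc A = mat (complex_of_real (\<Sum>i\<in>UNIV. \<Sum>j\<in>UNIV. cmod (A$i$j)))"

lemma Mc_Pos: "Mc A \<in> Pos"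
  unfolding Mc_def by (rule mat_Pos) (simp add: sum_nonneg)

lemma SA_dec: "A \<in> SA \<Longrightarrow> A + Mc A \<in> Pos"
  unfolding Mc_def by (rule SA_shift_Pos)

lemma part1:
  fixes s :: "real \<Rightarrow> 'v::ab_group_add \<Rightarrow> 'v" and f :: "complex^'n^'n \<Rightarrow> 'v"
  assumes vs: "vector_space s" and pl: "pos_linear_on s Pos f"
  shows "(\<exists>g. real_linear_on s SA g \<and> (\<forall>A\<in>Pos. g A = f A)) \<and>
          (\<forall>g1 g2. real_linear_on s SA g1 \<and> (\<forall>A\<in>Pos. g1 A = f A) \<and>
                   real_linear_on s SA g2 \<and> (\<forall>A\<in>Pos. g2 A = f A) \<longrightarrow>
                   (\<forall>A\<in>SA. g1 A = g2 A))"
proof -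
  interpret vector_space s by (rule vs)
  have fadd: "\<And>A B. A \<in> Pos \<Longrightarrow> B \<in> Pos \<Longrightarrow> f (A + B) = f A + f B"
    and fsc: "\<And>r A. r \<ge> 0 \<Longrightarrow> A \<in> Pos \<Longrightarrow> f (r *\<^sub>R A) = s r (f A)"
    using pl by (auto simp: pos_linear_on_def)
  have wd: "f P - f N = f P' - f N'" if "P \<in> Pos" "N \<in> Pos" "P' \<in> Pos" "N' \<in> Pos" "P - N = P' - N'"
    for P N P' N'
  proof -
    have "P + N' = P' + N" using that(5) by (simp add: algebra_simps)
    then have "f P + f N' = f P' + f N" using fadd that(1-4) by metis
    then show ?thesis by (simp add: algebra_simps)
  qed
  define g where "g A = f (A + Mc A) - f (Mc A)" for A
  have gdec: "g A = f P - f N" if "P \<in> Pos" "N \<in> Pos" "A = P - N" for A P N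
  proof -
    have "A \<in> SA" using that Pos_SA SA_diff by blast
    then show ?thesis unfolding g_def using that
      by (intro wd SA_dec Mc_Pos) simp_all
  qed
  have SA_dec': "\<And>A. A \<in> SA \<Longrightarrow> \<exists>P N. P \<in> Pos \<and> N \<in> Pos \<and> A = P - N"
    using SA_dec Mc_Pos by (metis add_diff_cancel)
  have lin: "real_linear_on s SA g"
    unfolding real_linear_on_def
  proof (intro conjI ballI allI)
    fix A B :: "complex^'n^'n" assume "A \<in> SA" "B \<in> SA"
    then obtain P N P' N' where "P \<in> Pos" "N \<in> Pos" "A = P - N" "P' \<in> Pos" "N' \<in> Pos" "B = P' - N'"
      using SA_dec' by metis
    note h = \<open>P \<in> Pos\<close> \<open>N \<in> Pos\<close> \<open>A = P - N\<close> \<open>P' \<in> Pos\<close> \<open>N' \<in> Pos\<close> \<open>B = P' - N'\<close>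
    have "A + B = (P + P') - (N + N')" unfolding h(3) h(6) by (simp add: algebra_simps)
    then have "g (A + B) = f (P + P') - f (N + N')"
      using h by (intro gdec Pos_add) auto
    also have "\<dots> = (f P - f N) + (f P' - f N')" using h fadd by (simp add: algebra_simps)
    also have "\<dots> = g A + g B" using h gdec by simp
    finally show "g (A + B) = g A + g B" .
  next
    fix r and A :: "complex^'n^'n" assume "A \<in> SA"
    then obtain P N where PN: "P \<in> Pos" "N \<in> Pos" "A = P - N"
      using SA_dec' by metis
    show "g (r *\<^sub>R A) = s r (g A)"
    proof (cases "r \<ge> 0")
      case True
      have "r *\<^sub>R A = r *\<^sub>R P - r *\<^sub>R N" unfolding PN(3) by (simp add: algebra_simps)
      then have "g (r *\<^sub>R A) = f (r *\<^sub>R P) - f (r *\<^sub>R N)"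
        using PN True by (intro gdec Pos_scale) auto
      also have "\<dots> = s r (f P - f N)" using PN True fsc by (simp add: scale_right_diff_distrib)
      also have "\<dots> = s r (g A)" using PN gdec by simp
      finally show ?thesis .
    next
      case False
      then have r: "- r \<ge> 0" by simp
      have "r *\<^sub>R A = (-r) *\<^sub>R N - (-r) *\<^sub>R P" unfolding PN(3) by (simp add: algebra_simps)
      then have "g (r *\<^sub>R A) = f ((-r) *\<^sub>R N) - f ((-r) *\<^sub>R P)"
        using PN r by (intro gdec Pos_scale) auto
      also have "\<dots> = s (-r) (f N) - s (-r) (f P)" using fsc[OF r PN(2)] fsc[OF r PN(1)] by (simp only:)
      also have "\<dots> = s r (f P - f N)" by (simp add: scale_right_diff_distrib)
      also have "\<dots> = s r (g A)" using PN gdec by simp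
      finally show ?thesis .
    qed
  qed
  have ext: "\<forall>A\<in>Pos. g A = f A"
  proof
    fix A :: "complex^'n^'n" assume "A \<in> Pos"
    moreover have "f 0 = 0" using fadd[OF Pos_zero Pos_zero] by simp
    ultimately show "g A = f A" using gdec[of A 0 A] Pos_zero by simp
  qed
  have uniq: "g1 A = g2 A"
    if "real_linear_on s SA g1" "\<forall>A\<in>Pos. g1 A = f A" "real_linear_on s SA g2" "\<forall>A\<in>Pos. g2 A = f A"
       "A \<in> SA" for g1 g2 and A :: "complex^'n^'n"
  proof -
    note outer = that
    have red: "k A = f P - f N" if "real_linear_on s SA k" "\<forall>A\<in>Pos. k A = f A"
      "P \<in> Pos" "N \<in> Pos" "A = P - N" for k P N
    proof -
      have "(-1::real) *\<^sub>R N \<in> SA" using that Pos_SA SA_scale by blast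
      moreover have "P \<in> SA" using that Pos_SA by blast
      ultimately have "k (P + (-1::real) *\<^sub>R N) = k P + k ((-1::real) *\<^sub>R N)"
        using that(1) unfolding real_linear_on_def by blast
      moreover have "k ((-1::real) *\<^sub>R N) = s (-1) (k N)"
        using that(1,4) Pos_SA unfolding real_linear_on_def by blast
      ultimately show ?thesis using that by simp
    qed
    obtain P N where "P \<in> Pos" "N \<in> Pos" "A = P - N" using SA_dec' outer(5) by metis
    then show ?thesis using red[OF outer(1,2)] red[OF outer(3,4)] by simp
  qed
  show ?thesis using lin ext uniq by blast
qed



definition H1 :: "complex^'n^'n \<Rightarrow> complex^'n^'n" where
  "H1 B = (\<chi> i j. (B$i$j + cnj (B$j$i)) / 2)"
definition H2 :: "complex^'n^'n \<Rightarrow> complex^'n^'n" where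
  "H2 B = (\<chi> i j. - \<i> * (B$i$j - cnj (B$j$i)) / 2)"

lemma H1_SA: "H1 B \<in> SA"
  by (simp add: SA_def H1_def cadj_def vec_eq_iff add.commute)
lemma H2_SA: "H2 B \<in> SA"
  by (simp add: SA_def H2_def cadj_def vec_eq_iff field_simps)
lemma H_recon: "B = H1 B + cscale \<i> (H2 B)"
  by (simp add: H1_def H2_def cscale_def vec_eq_iff field_simps)
lemma H1_SA_id: "A \<in> SA \<Longrightarrow> H1 A = A"
  by (simp add: SA_def H1_def cadj_def vec_eq_iff)
lemma H2_SA_id: "A \<in> SA \<Longrightarrow> H2 A = 0"
  by (simp add: SA_def H2_def cadj_def vec_eq_iff)
lemma H1_add: "H1 (A + B) = H1 A + H1 B"
  by (simp add: H1_def vec_eq_iff add_divide_distrib)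
lemma H2_add: "H2 (A + B) = H2 A + H2 B"
  by (simp add: H2_def vec_eq_iff field_simps)
lemma H1_scale: "H1 (cscale c B) = Re c *\<^sub>R H1 B - Im c *\<^sub>R H2 B"
  by (simp add: H1_def H2_def cscale_def vec_eq_iff complex_eq_iff algebra_simps field_simps)
lemma H2_scale: "H2 (cscale c B) = Re c *\<^sub>R H2 B + Im c *\<^sub>R H1 B"
  by (simp add: H1_def H2_def cscale_def vec_eq_iff complex_eq_iff algebra_simps field_simps)



lemma part2:
  fixes s :: "complex \<Rightarrow> 'w::ab_group_add \<Rightarrow> 'w" and h :: "complex^'n^'n \<Rightarrow> 'w"
  assumes vs: "vector_space s" and hl: "real_linear_on (\<lambda>r. s (complex_of_real r)) SA h"
  shows "\<exists>!g. complex_linear_ops s g \<and> (\<forall>A\<in>SA. g A = h A)"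
proof -
  interpret vector_space s by (rule vs)
  have hadd: "\<And>A B. A \<in> SA \<Longrightarrow> B \<in> SA \<Longrightarrow> h (A + B) = h A + h B"
    and hsc: "\<And>r A. A \<in> SA \<Longrightarrow> h (r *\<^sub>R A) = s (complex_of_real r) (h A)"
    using hl by (auto simp: real_linear_on_def)
  have h0: "h 0 = 0" using hadd[OF SA_zero SA_zero] by simp
  have hdiff: "h (A - B) = h A - h B" if "A \<in> SA" "B \<in> SA" for A B
  proof -
    have "h (A + (-1::real) *\<^sub>R B) = h A + h ((-1::real) *\<^sub>R B)"
      by (rule hadd[OF that(1) SA_scale[OF that(2)]])
    then show ?thesis using hsc[OF that(2), of "-1"] by simp
  qed
  define g where "g B = h (H1 B) + s \<i> (h (H2 B))" for B
  have lin: "complex_linear_ops s g"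
    unfolding complex_linear_ops_def
  proof (intro conjI allI)
    fix A B :: "complex^'n^'n"
    show "g (A + B) = g A + g B"
      unfolding g_def H1_add H2_add
      by (simp add: hadd[OF H1_SA H1_SA] hadd[OF H2_SA H2_SA] scale_right_distrib add_ac)
  next
    fix c and A :: "complex^'n^'n"
    let ?a = "complex_of_real (Re c)" and ?b = "complex_of_real (Im c)"
    have c: "c = ?a + \<i> * ?b" by (simp add: complex_eq_iff)
    have "g (cscale c A) = (s ?a (h (H1 A)) - s ?b (h (H2 A)))
        + s \<i> (s ?a (h (H2 A)) + s ?b (h (H1 A)))"
      unfolding g_def H1_scale H2_scale
      by (simp only: hdiff[OF SA_scale[OF H1_SA] SA_scale[OF H2_SA]]
          hadd[OF SA_scale[OF H2_SA] SA_scale[OF H1_SA]] hsc[OF H1_SA] hsc[OF H2_SA])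
    also have "\<dots> = s (?a + \<i> * ?b) (h (H1 A)) + s ((?a + \<i> * ?b) * \<i>) (h (H2 A))"
      by (simp add: algebra_simps scale_left_distrib scale_right_distrib)
    also have "\<dots> = s c (g A)"
      unfolding g_def by (simp add: c[symmetric] scale_right_distrib)
    finally show "g (cscale c A) = s c (g A)" .
  qed
  have ext: "\<forall>A\<in>SA. g A = h A"
    by (simp add: g_def H1_SA_id H2_SA_id h0)
  have uniq: "g' = g" if "complex_linear_ops s g'" "\<forall>A\<in>SA. g' A = h A" for g'
  proof
    fix B
    have "g' B = g' (H1 B + cscale \<i> (H2 B))" using H_recon[of B] by simp
    also have "\<dots> = g' (H1 B) + s \<i> (g' (H2 B))"
      using that(1) by (simp add: complex_linear_ops_def)
    also have "\<dots> = g B" using that(2) H1_SA[of B] H2_SA[of B] by (simp add: g_def)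
    finally show "g' B = g B" .
  qed
  show ?thesis using lin ext uniq by blast
qed


theorem theorem3p3:
  shows
  \<comment> \<open>Pos(H) \<hookrightarrow> SA(H) is a universal arrow to the forgetful functor Vect_R \<rightarrow> Mod_R>=0,
      i.e. its transpose R(Pos(H)) \<rightarrow> SA(H) is an isomorphism\<close>
  "(Pos :: (complex^'n^'n) set) \<subseteq> SA
   \<and> (\<forall>(s :: real \<Rightarrow> 'v::ab_group_add \<Rightarrow> 'v) (f :: complex^'n^'n \<Rightarrow> 'v).
        vector_space s \<and> pos_linear_on s Pos f \<longrightarrow>
          (\<exists>g. real_linear_on s SA g \<and> (\<forall>A\<in>Pos. g A = f A)) \<and>
          (\<forall>g1 g2. real_linear_on s SA g1 \<and> (\<forall>A\<in>Pos. g1 A = f A) \<and>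
                   real_linear_on s SA g2 \<and> (\<forall>A\<in>Pos. g2 A = f A) \<longrightarrow>
                   (\<forall>A\<in>SA. g1 A = g2 A)))
   \<comment> \<open>SA(H) \<hookrightarrow> B(H) is a universal arrow to the forgetful functor Vect_C \<rightarrow> Vect_R,
       i.e. its transpose C(SA(H)) \<rightarrow> B(H) is an isomorphism\<close>
   \<and> (\<forall>(s :: complex \<Rightarrow> 'w::ab_group_add \<Rightarrow> 'w) (h :: complex^'n^'n \<Rightarrow> 'w).
        vector_space s \<and> real_linear_on (\<lambda>r. s (complex_of_real r)) SA h \<longrightarrow>
          (\<exists>!g. complex_linear_ops s g \<and> (\<forall>A\<in>SA. g A = h A)))
   \<comment> \<open>functoriality / naturality: A \<mapsto> C A C^* preserves Pos and SA (the comparison maps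
       are then natural, being induced by the inclusions)\<close>
   \<and> (\<forall>C :: complex^'n::finite^'m::finite. (\<forall>A\<in>Pos. conj_map C A \<in> Pos) \<and> (\<forall>A\<in>SA. conj_map C A \<in> SA))"
  apply (intro conjI)
    apply (use Pos_SA in blast)
    apply (intro allI impI)
    apply (rule part1)
     apply (erule conjunct1)
    apply (erule conjunct2)
  apply (intro allI impI)
   apply (rule part2)
    apply (erule conjunct1)
   apply (erule conjunct2)
  apply (intro allI conjI ballI)
   apply (erule conj_Pos)
  apply (erule conj_SA)
  done

end
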